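(* Let $M,N\geq 2$ and let $\rho=\sum_{k=1}^n p_k|a^k\rangle\langle a^k|\otimes|b^k\rangle\langle b^k|$ be a classically correlated state on $\mathbb{C}^M\otimes\mathbb{C}^N$ (with $n>1$, $p_k\geq0$, $\sum_kp_k=1$, and unit vectors $|a^k\rangle\in\mathbb{C}^M$, $|b^k\rangle\in\mathbb{C}^N$). Then $$d_{\max}(\rho)\leq\sqrt{\frac{2(M-1)(N-1)}{MN}}.$$
   Context: For a state $\rho$ on $\mathbb{C}^M\otimes\mathbb{C}^N$ let $\rho_B=\mathrm{Tr}_A(\rho)$. A unitary $U^B$ on $\mathbb{C}^N$ is called cyclic for $\rho$ if $[\rho_B,U^B]=0$. Set $\rho_f=(I\otimes U^B)\rho(I\otimes U^{B\dagger})$ and define the Fu distance $d(\rho,U^B)=\frac{1}{\sqrt2}\|\rho-\rho_f\|_F$ (Frobenius norm $\|X\|_F=\sqrt{\mathrm{Tr}(X^\dagger X)}$). Define $d_{\max}(\rho)=\max\{d(\rho,U^B): U^B\text{ unitary},\ [\rho_B,U^B]=0\}$. *)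

theory Defs
  imports "HOL-Analysis.Analysis"
begin

text \<open>Square complex matrices indexed by a finite type; C^M (x) C^N is indexed by 'm \<times> 'n.\<close>

definition cadj :: "complex^'a^'a \<Rightarrow> complex^'a^'a" where
  "cadj A = (\<chi> i j. cnj (A $ j $ i))"

definition unitary_mat :: "complex^'a^'a \<Rightarrow> bool" where
  "unitary_mat U \<longleftrightarrow> U ** cadj U = mat 1 \<and> cadj U ** U = mat 1"

definition outer :: "complex^'a \<Rightarrow> complex^'a^'a" where
  "outer a = (\<chi> i j. a $ i * cnj (a $ j))"

definition tensor :: "complex^'a^'a \<Rightarrow> complex^'b^'b \<Rightarrow> complex^('a \<times> 'b)^('a \<times> 'b)" where
  "tensor A B = (\<chi> p q. A $ fst p $ fst q * B $ snd p $ snd q)"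

definition ptraceA :: "complex^('a::finite \<times> 'b)^('a \<times> 'b) \<Rightarrow> complex^'b^'b" where
  "ptraceA \<rho> = (\<chi> j j'. \<Sum>i\<in>UNIV. \<rho> $ (i, j) $ (i, j'))"

definition frob :: "complex^'a::finite^'a \<Rightarrow> real" where
  "frob X = sqrt (\<Sum>i\<in>UNIV. \<Sum>j\<in>UNIV. (cmod (X $ i $ j))\<^sup>2)"

definition fu_dist :: "complex^('a::finite \<times> 'b::finite)^('a \<times> 'b) \<Rightarrow> complex^'b^'b \<Rightarrow> real" where
  "fu_dist \<rho> U = (let \<rho>f = tensor (mat 1 :: complex^'a^'a) U ** \<rho> ** tensor (mat 1 :: complex^'a^'a) (cadj U)
                  in frob (\<rho> - \<rho>f) / sqrt 2)"

definition dmax :: "complex^('a::finite \<times> 'b::finite)^('a \<times> 'b) \<Rightarrow> real" where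
  "dmax \<rho> = Sup {fu_dist \<rho> U | U. unitary_mat U \<and> ptraceA \<rho> ** U = U ** ptraceA \<rho>}"

end

theory Submission
  imports Defs
begin


lemma norm_sq_vec: "(norm (x::'b::real_normed_vector^'a))\<^sup>2 = (\<Sum>i\<in>UNIV. (norm (x$i))\<^sup>2)"
  unfolding norm_vec_def L2_set_def by (simp add: sum_nonneg)

lemma norm_sq_mat: "(norm (X::complex^'a^'b))\<^sup>2 = (\<Sum>i\<in>UNIV. \<Sum>j\<in>UNIV. (cmod (X$i$j))\<^sup>2)"
  by (simp add: norm_sq_vec)

lemma frob_norm: "frob X = norm X"
  unfolding frob_def by (metis norm_sq_mat norm_ge_zero real_sqrt_abs real_sqrt_pow2_iff abs_of_nonneg)

lemma sum_UNIV_prod: "(\<Sum>k\<in>(UNIV::('a::finite\<times>'b::finite) set). f k) = (\<Sum>i\<in>UNIV. \<Sum>j\<in>UNIV. f (i,j))"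
  by (simp add: UNIV_Times_UNIV[symmetric] sum.cartesian_product del: UNIV_Times_UNIV)

lemma tensor_mult: "tensor A B ** tensor C D = tensor (A ** C) (B ** D)"
  unfolding tensor_def matrix_matrix_mult_def
  by (simp add: vec_eq_iff sum_UNIV_prod sum_product algebra_simps)

lemma norm_tensor: "norm (tensor A B) = norm A * norm B"
proof -
  have "(norm (tensor A B))\<^sup>2 = (norm A * norm B)\<^sup>2"
    unfolding power_mult_distrib norm_sq_mat tensor_def
    by (simp add: sum_UNIV_prod sum_product norm_mult power_mult_distrib)
  thus ?thesis by (simp add: power2_eq_iff_nonneg)
qed

lemma conj_outer: "U ** outer b ** cadj U = outer (U *v b)"
  unfolding outer_def cadj_def matrix_matrix_mult_def matrix_vector_mult_def
  by (simp add: vec_eq_iff sum_distrib_left sum_distrib_right algebra_simps cnj_sum; subst sum.swap; simp add: sum_distrib_left sum_distrib_right algebra_simps)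



lemma norm_sq_cvec: "complex_of_real ((norm (v::complex^'a))\<^sup>2) = (\<Sum>i\<in>UNIV. v$i * cnj (v$i))"
  unfolding norm_sq_vec of_real_sum by (simp only: norm_vec_def complex_norm_square)

lemma norm_unitary_mulv:
  assumes "unitary_mat U" shows "norm (U *v b) = norm b"
proof -
  have I: "(\<Sum>i\<in>UNIV. cnj (U$i$l) * U$i$k) = (if l = k then 1 else 0)" for l k
  proof -
    have "(cadj U ** U) $ l $ k = (mat 1 :: complex^'a^'a) $ l $ k" using assms unfolding unitary_mat_def by simp
    thus ?thesis unfolding cadj_def matrix_matrix_mult_def mat_def by simp
  qed
  have "complex_of_real ((norm (U *v b))\<^sup>2) = (\<Sum>i\<in>UNIV. (\<Sum>k\<in>UNIV. U$i$k * b$k) * (\<Sum>l\<in>UNIV. cnj (U$i$l) * cnj (b$l)))"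
    unfolding norm_sq_cvec matrix_vector_mult_def by (simp add: cnj_sum)
  also have "\<dots> = (\<Sum>k\<in>UNIV. \<Sum>l\<in>UNIV. b$k * cnj (b$l) * (\<Sum>i\<in>UNIV. cnj (U$i$l) * U$i$k))"
  proof -
    have "(\<Sum>i\<in>UNIV. (\<Sum>k\<in>UNIV. U$i$k * b$k) * (\<Sum>l\<in>UNIV. cnj (U$i$l) * cnj (b$l)))
       = (\<Sum>i\<in>UNIV. \<Sum>k\<in>UNIV. \<Sum>l\<in>UNIV. b$k * cnj (b$l) * (cnj (U$i$l) * U$i$k))"
      by (simp add: sum_product mult_ac)
    also have "\<dots> = (\<Sum>k\<in>UNIV. \<Sum>i\<in>UNIV. \<Sum>l\<in>UNIV. b$k * cnj (b$l) * (cnj (U$i$l) * U$i$k))"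
      by (rule sum.swap)
    also have "\<dots> = (\<Sum>k\<in>UNIV. \<Sum>l\<in>UNIV. \<Sum>i\<in>UNIV. b$k * cnj (b$l) * (cnj (U$i$l) * U$i$k))"
      by (rule sum.cong[OF refl], rule sum.swap)
    finally show ?thesis by (simp add: sum_distrib_left)
  qed
  also have "\<dots> = (\<Sum>k\<in>UNIV. b$k * cnj (b$k))"
    by (simp add: I if_distrib sum.If_cases cong: if_cong)
  also have "\<dots> = complex_of_real ((norm b)\<^sup>2)" by (rule norm_sq_cvec[symmetric])
  finally have "(norm (U *v b))\<^sup>2 = (norm b)\<^sup>2" using of_real_eq_iff by blast
  thus ?thesis by (simp add: power2_eq_iff_nonneg)
qed

lemma norm_outer_minus:
  assumes "norm (c::complex^'a) = 1"
  shows "norm (outer c - (1 / real CARD('a)) *\<^sub>R mat 1) = sqrt (1 - 1 / real CARD('a))"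
proof -
  define m where "m = real CARD('a)"
  have m0: "m > 0" unfolding m_def by simp
  define s where "s i = (cmod (c$i))\<^sup>2" for i
  have s1: "(\<Sum>i\<in>UNIV. s i) = 1" using assms norm_sq_vec[of c] unfolding s_def by simp
  have s1': "(\<Sum>i\<in>UNIV. s i * x) = x" for x using s1 by (simp add: sum_distrib_right[symmetric])
  have e: "(cmod ((outer c - (1 / m) *\<^sub>R mat 1) $ i $ j))\<^sup>2 =
      s i * s j - (if i = j then 2 * s i / m - 1 / m\<^sup>2 else 0)" for i j
  proof (cases "i = j")
    case True
    have "c$i * cnj (c$i) - complex_of_real (1/m) = complex_of_real (s i - 1/m)"
      unfolding s_def by (simp only: complex_norm_square of_real_diff)
    moreover have "(outer c - (1 / m) *\<^sub>R mat 1) $ i $ i = c$i * cnj (c$i) - (1/m) *\<^sub>R 1"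
      unfolding outer_def mat_def by simp
    ultimately have h: "(cmod ((outer c - (1 / m) *\<^sub>R mat 1) $ i $ j))\<^sup>2 = (s i - 1/m)\<^sup>2"
      using True by (simp add: scaleR_conv_of_real del: of_real_diff)
    show ?thesis unfolding h using True m0 by (simp add: power2_eq_square field_simps)
  next
    case False
    thus ?thesis unfolding outer_def mat_def s_def by (simp add: norm_mult power_mult_distrib)
  qed
  have "(norm (outer c - (1 / m) *\<^sub>R mat 1))\<^sup>2 = (\<Sum>i\<in>UNIV. \<Sum>j\<in>UNIV. s i * s j) - (\<Sum>i\<in>UNIV. 2 * s i / m - 1 / m\<^sup>2)"
    unfolding norm_sq_mat e by (simp add: sum_subtractf sum.delta)
  also have "\<dots> = 1 - 1 / m"
    using m0 by (simp add: sum_product[symmetric] s1 s1' sum_subtractf sum_divide_distrib[symmetric] sum_distrib_left[symmetric] m_def power2_eq_square field_simps)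
  finally show ?thesis unfolding m_def by (metis norm_ge_zero real_sqrt_abs abs_of_nonneg)
qed



lemma mat_scaleR_right: "(P::complex^'b^'a) ** (r *\<^sub>R X) = r *\<^sub>R (P ** X)"
  by (simp add: matrix_matrix_mult_def vec_eq_iff; simp add: scaleR_conv_of_real sum_distrib_left mult_ac)
lemma mat_scaleR_left: "(r *\<^sub>R X) ** (P::complex^'b^'a) = r *\<^sub>R (X ** P)"
  by (simp add: matrix_matrix_mult_def vec_eq_iff; simp add: scaleR_conv_of_real sum_distrib_left mult_ac)
lemma matrix_add_rdistrib: "(B + C) ** (A::complex^'b^'a) = (B ** A) + (C ** A)"
  by (vector matrix_matrix_mult_def sum.distrib[symmetric] field_simps)

lemma mult_sum:
  assumes "finite K"
  shows "(P::complex^'a^'a) ** (\<Sum>k\<in>K. w k *\<^sub>R X k) ** Q = (\<Sum>k\<in>K. w k *\<^sub>R (P ** X k ** Q))"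
  using assms
proof (induction K rule: finite_induct)
  case empty then show ?case by simp
next
  case (insert x F)
  then show ?case
    by (simp add: matrix_add_ldistrib matrix_add_rdistrib mat_scaleR_right mat_scaleR_left)
qed

lemma tensor_diff_left: "tensor (X - Y) Z = tensor X Z - tensor Y Z"
  by (simp add: tensor_def vec_eq_iff algebra_simps)
lemma tensor_diff_right: "tensor X (Y - Z) = tensor X Y - tensor X Z"
  by (simp add: tensor_def vec_eq_iff algebra_simps)
lemma tensor_sum_right: "tensor C (\<Sum>k\<in>K. w k *\<^sub>R Y k) = (\<Sum>k\<in>K. w k *\<^sub>R tensor C (Y k))"
  by (simp add: tensor_def vec_eq_iff sum_component; simp add: scaleR_conv_of_real sum_distrib_left mult_ac)
lemma tensor_zero_right: "tensor C 0 = 0"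
  by (simp add: tensor_def vec_eq_iff)

lemma key_identity:
  assumes "(\<Sum>k\<in>K. w k *\<^sub>R B k) = (\<Sum>k\<in>K. w k *\<^sub>R B' k)"
  shows "(\<Sum>k\<in>K. w k *\<^sub>R tensor (A k) (B k)) - (\<Sum>k\<in>K. w k *\<^sub>R tensor (A k) (B' k))
    = (\<Sum>k\<in>K. w k *\<^sub>R tensor (A k - C) (B k - D)) - (\<Sum>k\<in>K. w k *\<^sub>R tensor (A k - C) (B' k - D))"
proof -
  have "(\<Sum>k\<in>K. w k *\<^sub>R tensor (A k) (B k)) - (\<Sum>k\<in>K. w k *\<^sub>R tensor (A k) (B' k))
     - ((\<Sum>k\<in>K. w k *\<^sub>R tensor (A k - C) (B k - D)) - (\<Sum>k\<in>K. w k *\<^sub>R tensor (A k - C) (B' k - D)))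
     = (\<Sum>k\<in>K. w k *\<^sub>R tensor C (B k - B' k))"
    unfolding sum_subtractf[symmetric]
    by (rule sum.cong[OF refl]) (simp add: tensor_diff_left tensor_diff_right algebra_simps)
  also have "\<dots> = tensor C ((\<Sum>k\<in>K. w k *\<^sub>R B k) - (\<Sum>k\<in>K. w k *\<^sub>R B' k))"
    by (simp add: tensor_sum_right[symmetric] sum_subtractf[symmetric] scaleR_diff_right)
  also have "\<dots> = 0" using assms by (simp add: tensor_zero_right)
  finally show ?thesis by simp
qed

lemma ptrace_rho:
  assumes "\<forall>k\<in>K. norm (a k) = 1"
  shows "ptraceA (\<Sum>k\<in>K. w k *\<^sub>R tensor (outer (a k)) (outer (b k))) = (\<Sum>k\<in>K. w k *\<^sub>R outer (b k))"
proof -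
  have tr: "(\<Sum>i\<in>UNIV. a k $ i * cnj (a k $ i)) = 1" if "k \<in> K" for k
    using norm_sq_cvec[of "a k"] assms that by simp
  have tr': "(\<Sum>i\<in>UNIV. z * (a k $ i * cnj (a k $ i) * z')) = z * z'" if "k \<in> K" for k z z'
  proof -
    have "(\<Sum>i\<in>UNIV. z * (a k $ i * cnj (a k $ i) * z')) = (\<Sum>i\<in>UNIV. a k $ i * cnj (a k $ i)) * (z * z')"
      by (simp add: sum_distrib_left sum_distrib_right mult_ac)
    thus ?thesis using tr[OF that] by simp
  qed
  show ?thesis
    unfolding ptraceA_def
    apply (simp add: vec_eq_iff sum_component tensor_def outer_def)
    apply (simp add: scaleR_conv_of_real)
    apply (intro allI)
    apply (subst sum.swap)
    apply (rule sum.cong[OF refl])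
    using tr' by simp
qed



lemma norm_sum_bound:
  assumes "\<forall>k\<in>K. w k \<ge> 0" "\<forall>k\<in>K. norm (X k) \<le> s"
  shows "norm (\<Sum>k\<in>K. w k *\<^sub>R (X k :: 'v::real_normed_vector)) \<le> (\<Sum>k\<in>K. w k) * s"
proof -
  have "norm (\<Sum>k\<in>K. w k *\<^sub>R X k) \<le> (\<Sum>k\<in>K. norm (w k *\<^sub>R X k))" by (rule norm_sum)
  also have "\<dots> \<le> (\<Sum>k\<in>K. w k * s)"
    using assms by (intro sum_mono) (simp add: mult_left_mono)
  finally show ?thesis by (simp add: sum_distrib_right)
qed

lemma cadj_mat1: "cadj (mat 1 :: complex^'a^'a) = mat 1"
  by (simp add: cadj_def mat_def vec_eq_iff)

theorem mainTheorem8: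
  fixes n :: nat
    and p :: "nat \<Rightarrow> real"
    and a :: "nat \<Rightarrow> complex^'m::finite"
    and b :: "nat \<Rightarrow> complex^'n::finite"
    and \<rho> :: "complex^('m \<times> 'n)^('m \<times> 'n)"
  assumes "CARD('m) \<ge> 2" and "CARD('n) \<ge> 2"
    and "n > 1"
    and "\<forall>k\<in>{1..n}. p k \<ge> 0"
    and "(\<Sum>k=1..n. p k) = 1"
    and "\<forall>k\<in>{1..n}. norm (a k) = 1 \<and> norm (b k) = 1"
    and "\<rho> = (\<Sum>k=1..n. p k *\<^sub>R tensor (outer (a k)) (outer (b k)))"
  shows "dmax \<rho> \<le> sqrt (2 * (real CARD('m) - 1) * (real CARD('n) - 1) / (real CARD('m) * real CARD('n)))"
proof -
  define K where "K = {1..n}"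
  define M where "M = real CARD('m)"
  define N where "N = real CARD('n)"
  define CM where "CM = (1 / M) *\<^sub>R (mat 1 :: complex^'m^'m)"
  define CN where "CN = (1 / N) *\<^sub>R (mat 1 :: complex^'n^'n)"
  define s where "s = sqrt (1 - 1 / M) * sqrt (1 - 1 / N)"
  have fK: "finite K" unfolding K_def by simp
  have pK: "\<forall>k\<in>K. p k \<ge> 0" using assms(4) K_def by simp
  have sK: "(\<Sum>k\<in>K. p k) = 1" using assms(5) K_def by simp
  have aK: "\<forall>k\<in>K. norm (a k) = 1" and bK: "\<forall>k\<in>K. norm (b k) = 1" using assms(6) K_def by auto
  have rho: "\<rho> = (\<Sum>k\<in>K. p k *\<^sub>R tensor (outer (a k)) (outer (b k)))" using assms(7) K_def by simp
  have M1: "M \<ge> 1" and N1: "N \<ge> 1" using assms(1,2) M_def N_def by auto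
  have bound: "fu_dist \<rho> U \<le> sqrt (2 * (M - 1) * (N - 1) / (M * N))"
    if U: "unitary_mat U" and cm: "ptraceA \<rho> ** U = U ** ptraceA \<rho>" for U
  proof -
    define b' where "b' k = U *v b k" for k
    have b'K: "\<forall>k\<in>K. norm (b' k) = 1" using bK norm_unitary_mulv[OF U] b'_def by simp
    have rB: "ptraceA \<rho> = (\<Sum>k\<in>K. p k *\<^sub>R outer (b k))" using rho ptrace_rho[OF aK] by simp
    have rf: "tensor (mat 1 :: complex^'m^'m) U ** \<rho> ** tensor (mat 1 :: complex^'m^'m) (cadj U)
        = (\<Sum>k\<in>K. p k *\<^sub>R tensor (outer (a k)) (outer (b' k)))"
      unfolding rho mult_sum[OF fK] tensor_mult b'_def conj_outer[symmetric] by simp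
    have eqB: "(\<Sum>k\<in>K. p k *\<^sub>R outer (b k)) = (\<Sum>k\<in>K. p k *\<^sub>R outer (b' k))"
    proof -
      have "(\<Sum>k\<in>K. p k *\<^sub>R outer (b' k)) = U ** ptraceA \<rho> ** cadj U"
        unfolding rB mult_sum[OF fK] b'_def conj_outer by simp
      also have "\<dots> = ptraceA \<rho> ** (U ** cadj U)" using cm by (simp add: matrix_mul_assoc)
      also have "\<dots> = ptraceA \<rho>" using U unfolding unitary_mat_def by simp
      finally show ?thesis using rB by simp
    qed
    have diff: "\<rho> - (\<Sum>k\<in>K. p k *\<^sub>R tensor (outer (a k)) (outer (b' k)))
      = (\<Sum>k\<in>K. p k *\<^sub>R tensor (outer (a k) - CM) (outer (b k) - CN)) - (\<Sum>k\<in>K. p k *\<^sub>R tensor (outer (a k) - CM) (outer (b' k) - CN))"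
      unfolding rho by (rule key_identity[OF eqB])
    have n1: "norm (\<Sum>k\<in>K. p k *\<^sub>R tensor (outer (a k) - CM) (outer (b k) - CN)) \<le> s"
      using norm_sum_bound[OF pK, of "\<lambda>k. tensor (outer (a k) - CM) (outer (b k) - CN)" s] sK aK bK
      unfolding s_def CM_def CN_def M_def N_def by (simp add: norm_tensor norm_outer_minus)
    have n2: "norm (\<Sum>k\<in>K. p k *\<^sub>R tensor (outer (a k) - CM) (outer (b' k) - CN)) \<le> s"
      using norm_sum_bound[OF pK, of "\<lambda>k. tensor (outer (a k) - CM) (outer (b' k) - CN)" s] sK aK b'K
      unfolding s_def CM_def CN_def M_def N_def by (simp add: norm_tensor norm_outer_minus)
    have "norm (\<rho> - (\<Sum>k\<in>K. p k *\<^sub>R tensor (outer (a k)) (outer (b' k)))) \<le> 2 * s"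
      unfolding diff using norm_triangle_ineq4 n1 n2 by (smt (verit))
    hence "fu_dist \<rho> U \<le> 2 * s / sqrt 2"
      unfolding fu_dist_def Let_def rf frob_norm by (simp add: divide_right_mono)
    also have "2 * s / sqrt 2 = sqrt (2 * (M - 1) * (N - 1) / (M * N))"
    proof -
      have r2: "sqrt 2 * sqrt 2 = (2::real)" by simp
      have "2 * s / sqrt 2 = sqrt 2 * s" by (simp add: field_simps r2)
      also have "\<dots> = sqrt (2 * ((1 - 1/M) * (1 - 1/N)))" unfolding s_def by (simp add: real_sqrt_mult)
      also have "(1 - 1/M) * (1 - 1/N) = (M - 1) * (N - 1) / (M * N)" using M1 N1 by (simp add: field_simps)
      finally show ?thesis by (simp add: mult.assoc)
    qed
    finally show ?thesis .
  qed
  let ?S = "{fu_dist \<rho> U | U. unitary_mat U \<and> ptraceA \<rho> ** U = U ** ptraceA \<rho>}"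
  have ne: "?S \<noteq> {}"
  proof -
    have "unitary_mat (mat 1 :: complex^'n^'n)" unfolding unitary_mat_def cadj_mat1 by simp
    thus ?thesis by auto
  qed
  have "Sup ?S \<le> sqrt (2 * (M - 1) * (N - 1) / (M * N))"
    by (rule cSup_least[OF ne]) (use bound in blast)
  thus ?thesis unfolding dmax_def M_def N_def .
qed

end
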